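(* Let $q$ be a power of an odd prime, $r\ge1$ an integer, and $\mu\in\mathbb{F}_q$ such that $x^{2r+1}-\mu$ is irreducible in $\mathbb{F}_q[x]$. Then the number of $(z_0,\dots,z_{2r})\in\mathbb{F}_q^{2r+1}$ satisfying the system of $2r+1$ equations \[ \mu z_{l+r}^2+2\sum_{\{i,j\}\in U_{2l-1}}\mu_{\{i,j\}}z_iz_j=0\quad(1\le l\le r), \qquad z_l^2+2\sum_{\{i,j\}\in U_{2l}}\mu_{\{i,j\}}z_iz_j=0\quad(0\le l\le r), \] is at most $\frac{2r+5}{3}\,q^{\frac{4r}{3}+1}$.
   Context: For $0\le k\le 2r$, $U_k$ is the set of $2$-element subsets $\{i,j\}\subset\{0,1,\dots,2r\}$ (so $i\ne j$) with $i+j\equiv k\pmod{2r+1}$. For such a subset, $\mu_{\{i,j\}}=1$ if $1\le i+j\le 2r$ and $\mu_{\{i,j\}}=\mu$ if $2r+1\le i+j\le 4r-1$. *)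

theory Defs
  imports Complex_Main "HOL-Computational_Algebra.Computational_Algebra"
begin

definition U :: "nat \<Rightarrow> nat \<Rightarrow> nat set set" where
  "U r k = {{i, j} | i j. i \<le> 2*r \<and> j \<le> 2*r \<and> i \<noteq> j \<and> (i + j) mod (2*r+1) = k}"

definition muc :: "nat \<Rightarrow> 'a::field \<Rightarrow> nat set \<Rightarrow> 'a" where
  "muc r \<mu> s = (if 1 \<le> \<Sum>s \<and> \<Sum>s \<le> 2*r then 1 else \<mu>)"

end

theory Submission
  imports Defs
begin

lemma U_split:
  fixes z :: "nat \<Rightarrow> 'a::field"
  assumes k: "k \<le> 2*r"
  shows "(\<Sum>(i,j)\<in>{(i,j). i\<le>2*r \<and> j\<le>2*r \<and> (i+j) mod (2*r+1) = k}.
            (if i+j < 2*r+1 then 1 else \<mu>) * z i * z j)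
       = (\<Sum>i\<in>{i. i \<le> 2*r \<and> (2*i) mod (2*r+1) = k}. (if 2*i < 2*r+1 then 1 else \<mu>) * z i * z i)
         + 2 * (\<Sum>s\<in>U r k. muc r \<mu> s * (\<Prod>i\<in>s. z i))"
proof -
  define f where "f = (\<lambda>(i,j). (if i+j < 2*r+1 then 1 else \<mu>) * z i * z j)"
  define S where "S = {(i,j). i\<le>2*r \<and> j\<le>2*r \<and> (i+j) mod (2*r+1) = k}"
  define D where "D = {x\<in>S. fst x = snd x}"
  define L where "L = {x\<in>S. fst x < snd x}"
  define G where "G = {x\<in>S. fst x > snd x}"
  have finS: "finite S" unfolding S_def
    by (rule finite_subset[of _ "{0..2*r} \<times> {0..2*r}"]) auto
  have fin: "finite D" "finite L" "finite G" using finS unfolding D_def L_def G_def by auto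
  have Seq: "S = D \<union> (L \<union> G)" unfolding D_def L_def G_def by auto
  have e1: "sum f S = sum f D + (sum f L + sum f G)"
  proof -
    have "sum f (L \<union> G) = sum f L + sum f G"
      by (rule sum.union_disjoint) (use fin in \<open>auto simp: L_def G_def\<close>)
    moreover have "sum f (D \<union> (L \<union> G)) = sum f D + sum f (L \<union> G)"
      by (rule sum.union_disjoint) (use fin in \<open>auto simp: D_def L_def G_def\<close>)
    ultimately show ?thesis unfolding Seq by simp
  qed
  have e2: "sum f G = sum f L"
  proof -
    have "G = prod.swap ` L" unfolding G_def L_def S_def by (auto simp: image_iff add.commute)
    then have "sum f G = sum (f \<circ> prod.swap) L" by (simp add: sum.reindex)
    also have "\<dots> = sum f L" by (rule sum.cong) (auto simp: f_def add.commute mult.commute mult.left_commute)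
    finally show ?thesis .
  qed
  have e3: "sum f D = (\<Sum>i\<in>{i. i \<le> 2*r \<and> (2*i) mod (2*r+1) = k}. (if 2*i < 2*r+1 then 1 else \<mu>) * z i * z i)"
  proof -
    have "D = (\<lambda>i. (i,i)) ` {i. i \<le> 2*r \<and> (2*i) mod (2*r+1) = k}"
      unfolding D_def S_def by (auto simp: image_iff mult_2)
    then show ?thesis by (simp add: sum.reindex inj_on_def f_def mult_2)
  qed
  have e4: "sum f L = (\<Sum>s\<in>U r k. muc r \<mu> s * (\<Prod>i\<in>s. z i))"
  proof -
    have img: "U r k = (\<lambda>(i,j). {i,j}) ` L"
    proof
      show "U r k \<subseteq> (\<lambda>(i,j). {i,j}) ` L"
      proof
        fix s assume "s \<in> U r k"
        then obtain i j where s: "s = {i,j}" "i \<le> 2*r" "j \<le> 2*r" "i \<noteq> j" "(i+j) mod (2*r+1) = k"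
          unfolding U_def by auto
        show "s \<in> (\<lambda>(i,j). {i,j}) ` L"
        proof (cases "i < j")
          case True
          have "(i,j) \<in> L" using s True unfolding L_def S_def by auto
          moreover have "s = (\<lambda>(i,j). {i,j}) (i,j)" using s by auto
          ultimately show ?thesis by (rule rev_image_eqI)
        next
          case False
          have "(j,i) \<in> L" using s False unfolding L_def S_def by (auto simp: add.commute)
          moreover have "s = (\<lambda>(i,j). {i,j}) (j,i)" using s by auto
          ultimately show ?thesis by (rule rev_image_eqI)
        qed
      qed
      show "(\<lambda>(i,j). {i,j}) ` L \<subseteq> U r k"
      proof
        fix s assume "s \<in> (\<lambda>(i,j). {i,j}) ` L"
        then obtain a b where "s = {a,b}" "a < b" "b \<le> 2*r" "(a+b) mod (2*r+1) = k"
          unfolding L_def S_def by auto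
        then show "s \<in> U r k" unfolding U_def
          by (intro CollectI exI[of _ a] exI[of _ b]) auto
      qed
    qed
    have inj: "inj_on (\<lambda>(i,j). {i,j}) L"
      unfolding inj_on_def L_def by (auto simp: doubleton_eq_iff)
    have "(\<Sum>s\<in>U r k. muc r \<mu> s * (\<Prod>i\<in>s. z i))
          = (\<Sum>x\<in>L. (\<lambda>s. muc r \<mu> s * (\<Prod>i\<in>s. z i)) ((\<lambda>(i,j). {i,j}) x))"
      unfolding img by (rule sum.reindex[OF inj, unfolded comp_def])
    also have "\<dots> = sum f L"
    proof (rule sum.cong)
      fix x assume "x \<in> L"
      then obtain i j where x: "x = (i,j)" "i < j" "i + j \<le> 4*r" unfolding L_def S_def by auto
      then show "(\<lambda>s. muc r \<mu> s * (\<Prod>i\<in>s. z i)) ((\<lambda>(i,j). {i,j}) x) = f x"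
        by (auto simp: f_def muc_def)
    qed simp
    finally show ?thesis by simp
  qed
  have "sum f S = (\<Sum>i\<in>{i. i \<le> 2*r \<and> (2*i) mod (2*r+1) = k}. (if 2*i < 2*r+1 then 1 else \<mu>) * z i * z i)
         + 2 * (\<Sum>s\<in>U r k. muc r \<mu> s * (\<Prod>i\<in>s. z i))"
    by (simp only: e1 e2 e3 e4 mult_2)
  then show ?thesis unfolding f_def S_def .
qed

lemma mod2_case:
  fixes i r :: nat
  assumes "i \<le> 2*r"
  shows "(2*i) mod (2*r+1) = (if 2*i < 2*r+1 then 2*i else 2*i - (2*r+1))"
proof (cases "2*i < 2*r+1")
  case True then show ?thesis by simp
next
  case False
  then have "2*i = (2*i - (2*r+1)) + (2*r+1)" by simp
  then have "(2*i) mod (2*r+1) = (2*i - (2*r+1)) mod (2*r+1)" by (metis mod_add_self2)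
  also have "\<dots> = 2*i - (2*r+1)" using assms by simp
  finally show ?thesis using False by simp
qed

lemma p_dvd_term:
  fixes \<mu> a :: "'a::field"
  assumes "m < 2*n"
  shows "(monom 1 n - [:\<mu>:]) dvd (monom a m - monom ((if m < n then 1 else \<mu>) * a) (m mod n))"
proof (cases "m < n")
  case True then show ?thesis by simp
next
  case False
  then obtain t where t: "m = t + n" "t < n" using assms
    by (metis add.commute le_add_diff_inverse not_less add_less_cancel_right mult_2)
  then have "m mod n = t" by simp
  moreover have "monom a m - monom (\<mu> * a) t = monom a t * (monom 1 n - [:\<mu>:])"
    by (simp add: t(1) algebra_simps mult_monom monom_0[symmetric] del: monom_0)
  ultimately show ?thesis using False by (simp add: mult.commute[of _ "monom a t"])
qed

lemma zero_sol:
  fixes \<mu> :: "'a::field" and r :: nat and z :: "nat \<Rightarrow> 'a"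
  assumes irr: "irreducible (monom 1 (2*r+1) - [:\<mu>:])"
    and e1: "\<forall>l\<in>{1..r}. \<mu> * (z (l + r))^2
               + 2 * (\<Sum>s\<in>U r (2*l - 1). muc r \<mu> s * (\<Prod>i\<in>s. z i)) = 0"
    and e2: "\<forall>l\<in>{0..r}. (z l)^2
               + 2 * (\<Sum>s\<in>U r (2*l). muc r \<mu> s * (\<Prod>i\<in>s. z i)) = 0"
  shows "\<forall>i\<le>2*r. z i = 0"
proof -
  define n where "n = 2*r+1"
  define w where "w = (\<lambda>m::nat. if m < n then 1 else \<mu>)"
  define p where "p = monom 1 n - [:\<mu>:]"
  define A where "A = {0..2*r} \<times> {0..2*r}"
  define S where "S = (\<lambda>k. {(i,j). i\<le>2*r \<and> j\<le>2*r \<and> (i+j) mod (2*r+1) = k})"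
  define f where "f = (\<lambda>(i,j). (if i+j < 2*r+1 then 1 else \<mu>) * z i * z j)"
  have finA: "finite A" unfolding A_def by simp
  have ck: "sum f (S k) = 0" if k: "k \<le> 2*r" for k
  proof (cases "even k")
    case True
    then obtain l where l: "k = 2*l" by auto
    with k have lr: "l \<le> r" by simp
    have "{i. i \<le> 2*r \<and> (2*i) mod (2*r+1) = k} = {l}"
    proof -
      have "(2*i) mod (2*r+1) = k \<longleftrightarrow> i = l" if "i \<le> 2*r" for i
        unfolding mod2_case[OF that] l using lr that by (cases "2*i < 2*r+1"; simp; presburger)
      then show ?thesis using lr l by auto
    qed
    then have "sum f (S k) = z l * z l + 2 * (\<Sum>s\<in>U r k. muc r \<mu> s * (\<Prod>i\<in>s. z i))"
      using U_split[OF k, of \<mu> z] lr l unfolding f_def S_def by simp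
    also have "\<dots> = 0" using e2 lr l by (simp add: power2_eq_square)
    finally show ?thesis .
  next
    case False
    then obtain m where "k = 2*m+1" using oddE by blast
    then obtain l where l: "k = 2*l - 1" "1 \<le> l" by (intro that[of "m+1"]) auto
    with k have lr: "l \<le> r" by simp
    have "{i. i \<le> 2*r \<and> (2*i) mod (2*r+1) = k} = {l+r}"
    proof -
      have h: "(2*i) mod (2*r+1) = k \<longleftrightarrow> i = l + r" if "i \<le> 2*r" for i
        unfolding mod2_case[OF that] l(1) using l(2) lr that by (cases "2*i < 2*r+1"; simp; presburger)
      have "(2*(l+r)) mod (2*r+1) = k" using h[of "l+r"] lr by simp
      then show ?thesis using h lr by auto
    qed
    then have "sum f (S k) = \<mu> * z (l+r) * z (l+r) + 2 * (\<Sum>s\<in>U r k. muc r \<mu> s * (\<Prod>i\<in>s. z i))"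
      using U_split[OF k, of \<mu> z] lr l unfolding f_def S_def by simp
    also have "\<dots> = 0" using e1 lr l by (simp add: power2_eq_square mult.assoc)
    finally show ?thesis .
  qed
  define P where "P = (\<Sum>i\<in>{0..2*r}. monom (z i) i)"
  define R where "R = (\<Sum>x\<in>A. case x of (i,j) \<Rightarrow> monom (w (i+j) * (z i * z j)) ((i+j) mod n))"
  have PP: "P * P = (\<Sum>x\<in>A. case x of (i,j) \<Rightarrow> monom (z i * z j) (i+j))"
    unfolding P_def A_def sum_product by (simp add: mult_monom sum.cartesian_product)
  have R0: "R = 0"
  proof (rule poly_eqI)
    fix k
    have "coeff R k = (\<Sum>x\<in>A. if (fst x + snd x) mod n = k then f x else 0)"
      unfolding R_def coeff_sum
      by (rule sum.cong) (auto simp: coeff_monom f_def w_def n_def split: prod.split)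
    also have "\<dots> = 0"
    proof (cases "k \<le> 2*r")
      case True
      have "(\<Sum>x\<in>A. if (fst x + snd x) mod n = k then f x else 0) = sum f {x\<in>A. (fst x + snd x) mod n = k}"
        by (rule sum.inter_filter[OF finA, symmetric])
      also have "{x\<in>A. (fst x + snd x) mod n = k} = S k"
        unfolding A_def S_def n_def by auto
      finally show ?thesis using ck[OF True] by simp
    next
      case False
      have "(fst x + snd x) mod n \<noteq> k" for x
        using False unfolding n_def by (metis Suc_eq_plus1 less_Suc_eq_le mod_less_divisor zero_less_Suc)
      then show ?thesis by simp
    qed
    finally show "coeff R k = coeff 0 k" by simp
  qed
  have "p dvd P * P - R"
    unfolding PP R_def sum_subtractf[symmetric]
  proof (rule dvd_sum)
    fix x assume "x \<in> A"
    then obtain i j where x: "x = (i,j)" "i \<le> 2*r" "j \<le> 2*r" unfolding A_def by auto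
    have "i + j < 2 * n" using x unfolding n_def by simp
    from p_dvd_term[OF this, of \<mu> "z i * z j"]
    show "p dvd (case x of (i,j) \<Rightarrow> monom (z i * z j) (i+j)) - (case x of (i,j) \<Rightarrow> monom (w (i+j) * (z i * z j)) ((i+j) mod n))"
      using x unfolding p_def w_def by simp
  qed
  then have "p dvd P * P" using R0 by simp
  moreover have "prime_elem p" using irr unfolding p_def n_def by (rule field_poly_irreducible_imp_prime)
  ultimately have pdP: "p dvd P" using prime_elem_dvd_mult_iff by blast
  have coeffP: "coeff P i = (if i \<le> 2*r then z i else 0)" for i
    unfolding P_def coeff_sum by (simp add: coeff_monom)
  have degP: "degree P \<le> 2*r" by (rule degree_le) (simp add: coeffP)
  have degp: "n \<le> degree p" by (rule le_degree) (simp add: p_def n_def)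
  have "P = 0"
  proof (rule ccontr)
    assume "P \<noteq> 0"
    from dvd_imp_degree_le[OF pdP this] degP degp show False unfolding n_def by simp
  qed
  then show ?thesis using coeffP by (metis coeff_0)
qed

theorem lemma3p5:
  fixes \<mu> :: "'a::{field,finite}" and r :: nat
  assumes "\<exists>p k. prime p \<and> odd p \<and> k \<ge> 1 \<and> card (UNIV :: 'a set) = p ^ k"
    and "r \<ge> 1"
    and "irreducible (monom 1 (2*r+1) - [:\<mu>:])"
  shows "real (card {z \<in> {0..2*r} \<rightarrow>\<^sub>E (UNIV :: 'a set).
            (\<forall>l\<in>{1..r}. \<mu> * (z (l + r))^2
               + 2 * (\<Sum>s\<in>U r (2*l - 1). muc r \<mu> s * (\<Prod>i\<in>s. z i)) = 0) \<and>
            (\<forall>l\<in>{0..r}. (z l)^2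
               + 2 * (\<Sum>s\<in>U r (2*l). muc r \<mu> s * (\<Prod>i\<in>s. z i)) = 0)})
         \<le> (2 * real r + 5) / 3 * real (card (UNIV :: 'a set)) powr (4 * real r / 3 + 1)"
proof -
  let ?Sol = "{z \<in> {0..2*r} \<rightarrow>\<^sub>E (UNIV :: 'a set).
            (\<forall>l\<in>{1..r}. \<mu> * (z (l + r))^2
               + 2 * (\<Sum>s\<in>U r (2*l - 1). muc r \<mu> s * (\<Prod>i\<in>s. z i)) = 0) \<and>
            (\<forall>l\<in>{0..r}. (z l)^2
               + 2 * (\<Sum>s\<in>U r (2*l). muc r \<mu> s * (\<Prod>i\<in>s. z i)) = 0)}"
  have sub: "?Sol \<subseteq> {(\<lambda>i. if i \<in> {0..2*r} then 0 else undefined)}"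
  proof
    fix z assume zS: "z \<in> ?Sol"
    then have "\<forall>i\<le>2*r. z i = 0" using zero_sol[OF assms(3)] by blast
    moreover have "\<forall>i. i \<notin> {0..2*r} \<longrightarrow> z i = undefined" using zS by (auto simp: PiE_def extensional_def)
    ultimately have "z = (\<lambda>i. if i \<in> {0..2*r} then 0 else undefined)" by (auto simp: fun_eq_iff)
    then show "z \<in> {(\<lambda>i. if i \<in> {0..2*r} then 0 else undefined)}" by simp
  qed
  have c1: "card ?Sol \<le> 1"
    using card_mono[OF _ sub] by simp
  have q1: "real (card (UNIV :: 'a set)) \<ge> 1"
    using card_gt_0_iff[of "UNIV :: 'a set"] by simp
  have "1 \<le> real (card (UNIV :: 'a set)) powr (4 * real r / 3 + 1)"
    using q1 by (intro ge_one_powr_ge_zero) auto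
  moreover have "1 \<le> (2 * real r + 5) / 3" by simp
  ultimately have "1 \<le> (2 * real r + 5) / 3 * real (card (UNIV :: 'a set)) powr (4 * real r / 3 + 1)"
    using mult_mono[of 1 "(2 * real r + 5) / 3" 1] by fastforce
  moreover have "real (card ?Sol) \<le> 1" using c1 by simp
  ultimately show ?thesis by linarith
qed

end
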